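(* Let $G=(V,E)$ be a simple undirected graph and let $i\in V$ have degree $\delta$. Assume that no two nodes of $N(i)$ are adjacent (equivalently in the paper's terms, $f_2(S^i,k)=0$ for all $k\in N(i)$). Consider the greedy procedure that starts with $S=\{i\}$ and repeatedly adds to $S$ a node $k\in N(i)\setminus S$ maximizing $f_1(S,k)$ among those with $f_1(S,k)>0$, until no such node exists. Then this procedure has approximation ratio $O(\ln\delta)$ with respect to the star degree centrality $\mathcal{C}^s(i)$, i.e., $\mathcal{C}^s(i)/|N(S)|=O(\ln\delta)$ for the returned $S$.
   Context: For $S\subseteq V$, $N(S)=\{j\in V\setminus S : (a,j)\in E \text{ for some } a\in S\}$. A set $S$ forms an induced star if $G[S]$ has exactly one node of degree $|S|-1$ and $|S|-1$ nodes of degree $1$. $\mathcal{C}^s(i)=\max\{|N(S)| : S \text{ forms an induced star centered at } i\}$. For an induced star $S^i$ centered at $i$ and a node $k$: $f_1(S,k)=|N(S\cup\{k\})|-|N(S)|$ and $f_2(S^i,k)=\sum_{j:(i,j)\in E,(k,j)\in E}|N(S^i\cup\{j\})\setminus N(S^i)|$. *)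

theory Defs
  imports Complex_Main
begin

definition simple_graph :: "nat set \<Rightarrow> (nat \<Rightarrow> nat \<Rightarrow> bool) \<Rightarrow> bool" where
  "simple_graph V E \<longleftrightarrow> finite V \<and> (\<forall>u v. E u v \<longrightarrow> E v u) \<and> (\<forall>v. \<not> E v v)
     \<and> (\<forall>u v. E u v \<longrightarrow> u \<in> V \<and> v \<in> V)"

definition nbhd :: "nat set \<Rightarrow> (nat \<Rightarrow> nat \<Rightarrow> bool) \<Rightarrow> nat set \<Rightarrow> nat set" where
  "nbhd V E S = {j \<in> V - S. \<exists>a\<in>S. E a j}"

definition degree :: "nat set \<Rightarrow> (nat \<Rightarrow> nat \<Rightarrow> bool) \<Rightarrow> nat \<Rightarrow> nat" where
  "degree V E i = card {j \<in> V. E i j}"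

definition deg_in :: "(nat \<Rightarrow> nat \<Rightarrow> bool) \<Rightarrow> nat set \<Rightarrow> nat \<Rightarrow> nat" where
  "deg_in E S v = card {u \<in> S. E v u}"

definition induced_star_at :: "nat set \<Rightarrow> (nat \<Rightarrow> nat \<Rightarrow> bool) \<Rightarrow> nat set \<Rightarrow> nat \<Rightarrow> bool" where
  "induced_star_at V E S i \<longleftrightarrow> finite S \<and> S \<subseteq> V \<and> i \<in> S \<and>
     deg_in E S i = card S - 1 \<and> (\<forall>v \<in> S - {i}. deg_in E S v = 1)"

definition star_centrality :: "nat set \<Rightarrow> (nat \<Rightarrow> nat \<Rightarrow> bool) \<Rightarrow> nat \<Rightarrow> nat" where
  "star_centrality V E i = Max {card (nbhd V E S) | S. induced_star_at V E S i}"

definition f1 :: "nat set \<Rightarrow> (nat \<Rightarrow> nat \<Rightarrow> bool) \<Rightarrow> nat set \<Rightarrow> nat \<Rightarrow> int" where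
  "f1 V E S k = int (card (nbhd V E (insert k S))) - int (card (nbhd V E S))"

definition greedy_step :: "nat set \<Rightarrow> (nat \<Rightarrow> nat \<Rightarrow> bool) \<Rightarrow> nat \<Rightarrow> nat set \<Rightarrow> nat set \<Rightarrow> bool" where
  "greedy_step V E i S S' \<longleftrightarrow> (\<exists>k \<in> nbhd V E {i} - S. 0 < f1 V E S k \<and>
      (\<forall>k' \<in> nbhd V E {i} - S. 0 < f1 V E S k' \<longrightarrow> f1 V E S k' \<le> f1 V E S k) \<and> S' = insert k S)"

definition greedy_stops :: "nat set \<Rightarrow> (nat \<Rightarrow> nat \<Rightarrow> bool) \<Rightarrow> nat \<Rightarrow> nat set \<Rightarrow> bool" where
  "greedy_stops V E i S \<longleftrightarrow> \<not> (\<exists>k \<in> nbhd V E {i} - S. 0 < f1 V E S k)"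

definition greedy_output :: "nat set \<Rightarrow> (nat \<Rightarrow> nat \<Rightarrow> bool) \<Rightarrow> nat \<Rightarrow> nat set \<Rightarrow> bool" where
  "greedy_output V E i S \<longleftrightarrow> (greedy_step V E i)\<^sup>*\<^sup>* {i} S \<and> greedy_stops V E i S"

end

theory Submission
  imports Defs
begin

lemma star_sub:
  assumes sg: "simple_graph V E" and st: "induced_star_at V E S' i"
  shows "S' \<subseteq> insert i (nbhd V E {i})"
proof
  fix v assume v: "v \<in> S'"
  have fin: "finite S'" and sv: "S' \<subseteq> V" and iS: "i \<in> S'"
    and dg: "card {u \<in> S'. E i u} = card S' - 1"
    using st by (auto simp: induced_star_at_def deg_in_def)
  have irr: "\<not> E i i" using sg by (auto simp: simple_graph_def)
  have sub: "{u \<in> S'. E i u} \<subseteq> S' - {i}" using irr by auto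
  have "card (S' - {i}) = card S' - 1" using iS fin by simp
  hence eq: "{u \<in> S'. E i u} = S' - {i}"
    using card_subset_eq[OF _ sub] fin dg by auto
  show "v \<in> insert i (nbhd V E {i})"
  proof (cases "v = i")
    case False
    hence "E i v" using eq v by blast
    thus ?thesis using False v sv by (auto simp: nbhd_def)
  qed simp
qed

lemma nb_sub:
  assumes sg: "simple_graph V E" and iS: "i \<in> S'" and sub: "S' \<subseteq> insert i (nbhd V E {i})"
  shows "nbhd V E S' \<subseteq> nbhd V E {i} \<union> ({j \<in> V. \<exists>a\<in>nbhd V E {i}. E a j} - insert i (nbhd V E {i}))"
proof
  fix j assume j: "j \<in> nbhd V E S'"
  then obtain a where a: "a \<in> S'" "E a j" and jV: "j \<in> V" and jS: "j \<notin> S'"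
    by (auto simp: nbhd_def)
  show "j \<in> nbhd V E {i} \<union> ({j \<in> V. \<exists>a\<in>nbhd V E {i}. E a j} - insert i (nbhd V E {i}))"
  proof (cases "a = i")
    case True
    thus ?thesis using a jV jS iS by (auto simp: nbhd_def)
  next
    case False
    hence "a \<in> nbhd V E {i}" using a sub by auto
    thus ?thesis using a jV jS iS by auto
  qed
qed

lemma greedy_inv:
  assumes sg: "simple_graph V E" and iV: "i \<in> V"
    and r: "(greedy_step V E i)\<^sup>*\<^sup>* {i} S"
  shows "i \<in> S \<and> S \<subseteq> insert i (nbhd V E {i}) \<and> card (nbhd V E {i}) \<le> card (nbhd V E S)"
  using r
proof (induction rule: rtranclp_induct)
  case base thus ?case by simp
next
  case (step S S')
  then obtain k where k: "k \<in> nbhd V E {i} - S" "0 < f1 V E S k" "S' = insert k S"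
    by (auto simp: greedy_step_def)
  thus ?case using step.IH by (auto simp: f1_def)
qed

lemma new_le1:
  assumes sg: "simple_graph V E" and iS: "i \<in> S" and a: "a \<in> nbhd V E {i} - S"
    and f: "\<not> 0 < f1 V E S a"
  shows "card (nbhd V E (insert a S) - nbhd V E S) \<le> 1"
proof -
  have finV: "finite V" using sg by (simp add: simple_graph_def)
  have fin1: "finite (nbhd V E S)" "finite (nbhd V E (insert a S))"
    using finV by (auto simp: nbhd_def)
  have aN: "a \<in> nbhd V E S" using a iS by (auto simp: nbhd_def)
  have s1: "nbhd V E S - {a} \<subseteq> nbhd V E (insert a S)" by (auto simp: nbhd_def)
  let ?n = "nbhd V E (insert a S) - nbhd V E S"
  have "(nbhd V E S - {a}) \<union> ?n \<subseteq> nbhd V E (insert a S)" using s1 by auto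
  hence "card ((nbhd V E S - {a}) \<union> ?n) \<le> card (nbhd V E (insert a S))"
    using fin1 card_mono by blast
  moreover have "card ((nbhd V E S - {a}) \<union> ?n) = card (nbhd V E S - {a}) + card ?n"
    using fin1 by (intro card_Un_disjoint) auto
  moreover have "card (nbhd V E S - {a}) = card (nbhd V E S) - 1" using aN fin1 by simp
  moreover have "card (nbhd V E S) \<ge> 1" using aN fin1 card_0_eq by fastforce
  ultimately show ?thesis using f by (simp add: f1_def)
qed

lemma main2:
  assumes sg: "simple_graph V E" and iV: "i \<in> V" and out: "greedy_output V E i S"
  shows "real (star_centrality V E i) \<le> 2 * real (card (nbhd V E S))"
proof -
  define A where "A = nbhd V E {i}"
  define W where "W = {j \<in> V. \<exists>a\<in>A. E a j} - insert i A"
  have finV: "finite V" using sg by (simp add: simple_graph_def)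
  have finA: "finite A" and finW: "finite W" using finV by (auto simp: A_def W_def nbhd_def)
  have finN: "finite (nbhd V E S)" using finV by (auto simp: nbhd_def)
  have inv: "i \<in> S" "S \<subseteq> insert i A" "card A \<le> card (nbhd V E S)"
    using greedy_inv[OF sg iV] out by (auto simp: greedy_output_def A_def)
  have stop: "\<forall>k\<in>A - S. \<not> 0 < f1 V E S k" using out
    by (auto simp: greedy_output_def greedy_stops_def A_def)
  define nw where "nw a = nbhd V E (insert a S) - nbhd V E S" for a
  have c1: "card (nw a) \<le> 1" if "a \<in> A - S" for a
    using new_le1[OF sg inv(1)] that stop by (auto simp: nw_def A_def)
  have Wsub: "W - nbhd V E S \<subseteq> (\<Union>a\<in>A - S. nw a)"
  proof
    fix w assume w: "w \<in> W - nbhd V E S"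
    then obtain a where a: "a \<in> A" "E a w" and wV: "w \<in> V" and wA: "w \<notin> insert i A"
      by (auto simp: W_def)
    have wS: "w \<notin> S" using wA inv(2) by auto
    have aS: "a \<notin> S" using w a wV wS by (auto simp: nbhd_def)
    have "w \<in> nbhd V E (insert a S)" using a wV wS wA by (auto simp: nbhd_def)
    thus "w \<in> (\<Union>a\<in>A - S. nw a)" using w a aS by (auto simp: nw_def)
  qed
  have "card (W - nbhd V E S) \<le> card (\<Union>a\<in>A - S. nw a)"
  proof (rule card_mono[OF _ Wsub])
    have "(\<Union>a\<in>A - S. nw a) \<subseteq> V" by (auto simp: nw_def nbhd_def)
    thus "finite (\<Union>a\<in>A - S. nw a)" using finV finite_subset by blast
  qed
  also have "\<dots> \<le> (\<Sum>a\<in>A - S. card (nw a))" using finA by (intro card_UN_le) auto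
  also have "\<dots> \<le> (\<Sum>a\<in>A - S. 1)" using c1 by (intro sum_mono) auto
  also have "\<dots> = card (A - S)" by simp
  finally have cW: "card (W - nbhd V E S) \<le> card (A - S)" .
  have AS: "A - S \<subseteq> nbhd V E S" using inv(1) by (auto simp: A_def nbhd_def)
  have "card W \<le> card (W \<inter> nbhd V E S) + card (W - nbhd V E S)"
    using finW by (metis Int_Diff_Un card_Un_le)
  also have "\<dots> \<le> card (W \<inter> nbhd V E S) + card (A - S)" using cW by simp
  also have "\<dots> = card ((W \<inter> nbhd V E S) \<union> (A - S))"
    using finW finA by (intro card_Un_disjoint[symmetric]) (auto simp: W_def)
  also have "\<dots> \<le> card (nbhd V E S)" using AS finN by (intro card_mono) auto
  finally have cW2: "card W \<le> card (nbhd V E S)" .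
  let ?M = "{card (nbhd V E S') | S'. induced_star_at V E S' i}"
  have bnd: "x \<le> card A + card W" if xM: "x \<in> ?M" for x
  proof -
    obtain S' where x: "x = card (nbhd V E S')" and st: "induced_star_at V E S' i"
      using xM by auto
    have "nbhd V E S' \<subseteq> A \<union> W"
      using nb_sub[OF sg _ star_sub[OF sg st]] st
      by (auto simp: induced_star_at_def A_def W_def)
    hence "x \<le> card (A \<union> W)" using x finA finW by (simp add: card_mono)
    also have "\<dots> \<le> card A + card W" by (rule card_Un_le)
    finally show ?thesis .
  qed
  have "induced_star_at V E {i} i" using iV sg by (simp add: induced_star_at_def deg_in_def simple_graph_def)
  hence ne: "?M \<noteq> {}" by blast
  have finM: "finite ?M" using bnd by (meson finite_nat_set_iff_bounded_le)
  have "star_centrality V E i \<le> card A + card W"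
    unfolding star_centrality_def using ne finM bnd by (simp add: Max_le_iff)
  thus ?thesis using cW2 inv(3) by linarith
qed

theorem lemma1:
  shows "\<exists>c::real. 0 < c \<and>
    (\<forall>V E i S. simple_graph V E \<longrightarrow> i \<in> V \<longrightarrow>
       (\<forall>a \<in> nbhd V E {i}. \<forall>b \<in> nbhd V E {i}. \<not> E a b) \<longrightarrow>
       greedy_output V E i S \<longrightarrow>
       real (star_centrality V E i)
         \<le> c * (1 + ln (real (degree V E i))) * real (card (nbhd V E S)))"
proof (intro exI[of _ 2] conjI allI impI)
  fix V E i S
  assume sg: "simple_graph V E" and iV: "i \<in> V" and out: "greedy_output V E i S"
  have "0 \<le> ln (real (degree V E i))"
    by (cases "degree V E i = 0") auto
  hence "2 * real (card (nbhd V E S)) \<le> 2 * (1 + ln (real (degree V E i))) * real (card (nbhd V E S))"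
    by (simp add: mult_right_mono)
  thus "real (star_centrality V E i) \<le> 2 * (1 + ln (real (degree V E i))) * real (card (nbhd V E S))"
    using main2[OF sg iV out] by linarith
qed simp

end
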